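(* Let $(S,|\cdot|)$ be a finite metric space with $n\ge 3$ points, let $t\ge 1$ be a real number, and let $G'=(S,E')$ be a $t$-spanner for $S$ with $m$ edges. Let $G=(S,E)$ be the graph obtained from $G'$ by the construction described in the context with parameter $f=1$. Then $G$ is a $1$-faulty-degree $(3t)$-spanner for $S$ and has at most $3m$ edges.
   Context: For a finite metric space $(S,|\cdot|)$, $K_S$ denotes the complete graph on $S$ in which each edge $\{p,q\}$ has weight $|pq|$. All graphs on vertex set $S$ considered have edge weights $|pq|$. For an edge-weighted graph $X$ and vertices $p,q$, $\delta_X(p,q)$ is the length of a shortest path between $p$ and $q$ in $X$ ($+\infty$ if none exists). For a set $F$ of edges, $X\setminus F$ is the graph with the same vertex set as $X$ and edge set $E_X\setminus F$. A graph $G'=(S,E')$ is a $t$-spanner for $S$ if $\delta_{G'}(p,q)\le t|pq|$ for all $p,q\in S$. For an integer $f\ge 0$ and real $t\ge1$, a graph $G=(S,E)$ is an $f$-faulty-degree $t$-spanner for $S$ if for every subset $F\subseteq E$ such that the graph $(S,F)$ has maximum degree at most $f$, and for all $p,q\in S$, $\delta_{G\setminus F}(p,q)\le t\cdot\delta_{K_S\setminus F}(p,q)$. Construction: Let $G'=(S,E')$ be a $t$-spanner for $S$, $n=|S|$, and let $f$ be an integer with $1\le f\le (n-1)/2$. For each edge $\{a,b\}\in E'$, list the points of $S\setminus\{a,b\}$ as $c_1,\dots,c_{n-2}$ in non-decreasing order of $|ac_i|+|c_ib|$ (ties broken arbitrarily) and let $C_{ab}=\{c_1,\dots,c_{2f-1}\}$.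 The graph $G=(S,E)$ has edge set $E=E'\cup\{\{a,c\},\{c,b\}:\{a,b\}\in E',\ c\in C_{ab}\}$. *)

theory Defs
  imports "HOL-Library.Extended_Real"
begin

definition metric_on :: "'a set \<Rightarrow> ('a \<Rightarrow> 'a \<Rightarrow> real) \<Rightarrow> bool" where
  "metric_on S d \<longleftrightarrow>
     (\<forall>p\<in>S. \<forall>q\<in>S. d p q \<ge> 0 \<and> (d p q = 0 \<longleftrightarrow> p = q) \<and> d p q = d q p) \<and>
     (\<forall>p\<in>S. \<forall>q\<in>S. \<forall>r\<in>S. d p r \<le> d p q + d q r)"

definition complete_edges :: "'a set \<Rightarrow> 'a set set" where
  "complete_edges S = {{p, q} | p q. p \<in> S \<and> q \<in> S \<and> p \<noteq> q}"

definition is_walk :: "'a set set \<Rightarrow> 'a list \<Rightarrow> bool" where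
  "is_walk E xs \<longleftrightarrow> xs \<noteq> [] \<and> (\<forall>i < length xs - 1. {xs ! i, xs ! Suc i} \<in> E)"

definition walk_length :: "('a \<Rightarrow> 'a \<Rightarrow> real) \<Rightarrow> 'a list \<Rightarrow> real" where
  "walk_length d xs = (\<Sum>i < length xs - 1. d (xs ! i) (xs ! Suc i))"

text \<open>Shortest-path distance delta_X(p,q); +infinity if no path exists.\<close>
definition graph_dist :: "('a \<Rightarrow> 'a \<Rightarrow> real) \<Rightarrow> 'a set set \<Rightarrow> 'a \<Rightarrow> 'a \<Rightarrow> ereal" where
  "graph_dist d E p q =
     (INF xs \<in> {xs. is_walk E xs \<and> hd xs = p \<and> last xs = q}. ereal (walk_length d xs))"

definition is_spanner :: "'a set \<Rightarrow> ('a \<Rightarrow> 'a \<Rightarrow> real) \<Rightarrow> 'a set set \<Rightarrow> real \<Rightarrow> bool" where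
  "is_spanner S d E t \<longleftrightarrow> (\<forall>p\<in>S. \<forall>q\<in>S. graph_dist d E p q \<le> ereal (t * d p q))"

definition is_faulty_degree_spanner ::
  "'a set \<Rightarrow> ('a \<Rightarrow> 'a \<Rightarrow> real) \<Rightarrow> 'a set set \<Rightarrow> nat \<Rightarrow> real \<Rightarrow> bool" where
  "is_faulty_degree_spanner S d E f t \<longleftrightarrow>
     (\<forall>F. F \<subseteq> E \<and> (\<forall>v\<in>S. card {e \<in> F. v \<in> e} \<le> f) \<longrightarrow>
        (\<forall>p\<in>S. \<forall>q\<in>S. graph_dist d (E - F) p q \<le> ereal t * graph_dist d (complete_edges S - F) p q))"

text \<open>C assigns to each edge {a,b} of E' the set C_ab:
  the first 2f-1 points of S-{a,b} in some non-decreasing order of |ac|+|cb|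
  (ties broken arbitrarily), i.e. a (2f-1)-subset of S-{a,b} all of whose elements
  are no worse than every element outside it.\<close>
definition is_construction ::
  "'a set \<Rightarrow> ('a \<Rightarrow> 'a \<Rightarrow> real) \<Rightarrow> 'a set set \<Rightarrow> nat \<Rightarrow> ('a set \<Rightarrow> 'a set) \<Rightarrow> 'a set set \<Rightarrow> bool" where
  "is_construction S d E' f C E \<longleftrightarrow>
     (\<forall>a b. {a, b} \<in> E' \<longrightarrow>
        C {a, b} \<subseteq> S - {a, b} \<and> card (C {a, b}) = 2 * f - 1 \<and>
        (\<forall>c\<in>C {a, b}. \<forall>c'\<in>S - {a, b} - C {a, b}. d a c + d c b \<le> d a c' + d c' b)) \<and>
     E = E' \<union> {{a, c} | a b c. {a, b} \<in> E' \<and> c \<in> C {a, b}}"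

end

theory Submission
  imports Defs
begin

fun walkE :: "'a set set \<Rightarrow> 'a list \<Rightarrow> bool" where
  "walkE H [] = False"
| "walkE H [x] = True"
| "walkE H (x # y # xs) = ({x, y} \<in> H \<and> walkE H (y # xs))"

fun wlen :: "('a \<Rightarrow> 'a \<Rightarrow> real) \<Rightarrow> 'a list \<Rightarrow> real" where
  "wlen d [] = 0"
| "wlen d [x] = 0"
| "wlen d (x # y # xs) = d x y + wlen d (y # xs)"

lemma all_less_Suc_split: "(\<forall>i<Suc n. P i) \<longleftrightarrow> P 0 \<and> (\<forall>i<n. P (Suc i))"
  by (auto simp: less_Suc_eq_0_disj)

lemma is_walk_eq: "is_walk H xs = walkE H xs"
proof (induction H xs rule: walkE.induct)
  case (1 H) then show ?case by (simp add: is_walk_def)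
next
  case (2 H x) then show ?case by (simp add: is_walk_def)
next
  case (3 H x y xs)
  have "is_walk H (x # y # xs) \<longleftrightarrow> (\<forall>i < Suc (length xs). {(x#y#xs) ! i, (x#y#xs) ! Suc i} \<in> H)"
    unfolding is_walk_def by simp
  also have "\<dots> \<longleftrightarrow> {x,y} \<in> H \<and> (\<forall>i < length xs. {(y#xs) ! i, (y#xs) ! Suc i} \<in> H)"
    unfolding all_less_Suc_split by simp
  also have "\<dots> \<longleftrightarrow> {x,y} \<in> H \<and> is_walk H (y # xs)"
    unfolding is_walk_def by simp
  finally show ?case using 3 by simp
qed

lemma walk_length_eq: "walk_length d xs = wlen d xs"
proof (induction d xs rule: wlen.induct)
  case (3 d x y xs)
  have "walk_length d (x # y # xs) = (\<Sum>i<Suc (length xs). d ((x#y#xs) ! i) ((x#y#xs) ! Suc i))"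
    unfolding walk_length_def by simp
  also have "\<dots> = d x y + (\<Sum>i<length xs. d ((y#xs) ! i) ((y#xs) ! Suc i))"
    by (subst sum.lessThan_Suc_shift) simp
  also have "\<dots> = d x y + walk_length d (y # xs)"
    unfolding walk_length_def by simp
  finally show ?case using 3 by simp
qed (auto simp: walk_length_def)

lemma walkE_app:
  "walkE H (xs @ v # ys) \<longleftrightarrow> walkE H (xs @ [v]) \<and> walkE H (v # ys)"
proof (induction xs)
  case Nil then show ?case by (cases ys) auto
next
  case (Cons a xs) then show ?case by (cases xs) auto
qed

lemma wlen_app:
  "wlen d (xs @ v # ys) = wlen d (xs @ [v]) + wlen d (v # ys)"
proof (induction xs)
  case Nil then show ?case by simp
next
  case (Cons a xs) then show ?case by (cases xs) auto
qed

definition reach :: "('a \<Rightarrow> 'a \<Rightarrow> real) \<Rightarrow> 'a set set \<Rightarrow> 'a \<Rightarrow> 'a \<Rightarrow> real \<Rightarrow> bool" where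
  "reach d H p q L \<longleftrightarrow> (\<exists>ws. walkE H ws \<and> hd ws = p \<and> last ws = q \<and> wlen d ws \<le> L)"

lemma reach_refl: "L \<ge> 0 \<Longrightarrow> reach d H p p L"
  unfolding reach_def by (rule exI[of _ "[p]"]) simp

lemma reach_edge: "{p,q} \<in> H \<Longrightarrow> d p q \<le> L \<Longrightarrow> reach d H p q L"
  unfolding reach_def by (rule exI[of _ "[p,q]"]) simp

lemma reach_mono: "reach d H p q L \<Longrightarrow> L \<le> L' \<Longrightarrow> reach d H p q L'"
  unfolding reach_def by force

lemma reach_trans:
  assumes "reach d H p q a" "reach d H q r b"
  shows "reach d H p r (a + b)"
proof -
  obtain xs where xs: "walkE H xs" "hd xs = p" "last xs = q" "wlen d xs \<le> a"
    using assms(1) unfolding reach_def by blast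
  obtain ys where ys: "walkE H ys" "hd ys = q" "last ys = r" "wlen d ys \<le> b"
    using assms(2) unfolding reach_def by blast
  have xne: "xs \<noteq> []" and yne: "ys \<noteq> []" using xs ys by auto
  obtain xs0 where xs0: "xs = xs0 @ [q]" using xne xs(3) by (metis append_butlast_last_id)
  obtain ys0 where ys0: "ys = q # ys0" using yne ys(2) by (cases ys) auto
  define zs where "zs = xs0 @ q # ys0"
  have w1: "walkE H (xs0 @ [q])" using xs(1) xs0 by (simp only:)
  have w2: "walkE H (q # ys0)" using ys(1) ys0 by (simp only:)
  have "walkE H zs" unfolding zs_def using walkE_app[of H xs0 q ys0] w1 w2 by blast
  moreover have "wlen d zs = wlen d xs + wlen d ys" unfolding zs_def
    using wlen_app[of d xs0 q ys0] xs0 ys0 by (simp only:)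
  moreover have "hd zs = p" using xs xs0 unfolding zs_def by (cases xs0) auto
  moreover have "last zs = r" using ys ys0 unfolding zs_def by (cases ys0) auto
  ultimately show ?thesis unfolding reach_def using xs ys by (intro exI[of _ zs]) auto
qed

lemma reach_dist: "reach d H p q L \<Longrightarrow> graph_dist d H p q \<le> ereal L"
  unfolding reach_def graph_dist_def is_walk_eq walk_length_eq
  by (auto intro!: INF_lower2)


lemma ce_mem: "{x,y} \<in> complete_edges S \<Longrightarrow> x \<in> S \<and> y \<in> S \<and> x \<noteq> y"
  unfolding complete_edges_def by (auto simp: doubleton_eq_iff)

locale setting =
  fixes S :: "'a set" and d :: "'a \<Rightarrow> 'a \<Rightarrow> real" and E' E F :: "'a set set"
    and C :: "'a set \<Rightarrow> 'a set"
  assumes finS: "finite S" and met: "metric_on S d" and sub: "E' \<subseteq> complete_edges S"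
    and cons: "is_construction S d E' 1 C E"
    and FE: "F \<subseteq> E" and deg: "\<forall>v\<in>S. card {e\<in>F. v\<in>e} \<le> 1"
begin

lemma dsym: "x \<in> S \<Longrightarrow> y \<in> S \<Longrightarrow> d x y = d y x"
  using met unfolding metric_on_def by blast
lemma dnn: "x \<in> S \<Longrightarrow> y \<in> S \<Longrightarrow> d x y \<ge> 0"
  using met unfolding metric_on_def by blast
lemma dtri: "x \<in> S \<Longrightarrow> y \<in> S \<Longrightarrow> z \<in> S \<Longrightarrow> d x z \<le> d x y + d y z"
  using met unfolding metric_on_def by blast

lemma E'_edge: "{x,y} \<in> E' \<Longrightarrow> x \<in> S \<and> y \<in> S \<and> x \<noteq> y"
proof -
  assume "{x,y} \<in> E'"
  then have "{x,y} \<in> complete_edges S" by (rule subsetD[OF sub])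
  then show ?thesis by (rule ce_mem)
qed

lemma Edef: "E = E' \<union> {{a, c} | a b c. {a, b} \<in> E' \<and> c \<in> C {a, b}}"
  using cons unfolding is_construction_def by (elim conjE)

lemma Cprops: "{a,b} \<in> E' \<Longrightarrow> C {a, b} \<subseteq> S - {a, b} \<and> card (C {a, b}) = 1 \<and>
        (\<forall>c\<in>C {a, b}. \<forall>c'\<in>S - {a, b} - C {a, b}. d a c + d c b \<le> d a c' + d c' b)"
  using cons unfolding is_construction_def by simp

lemma detour:
  assumes "{a,b} \<in> E'"
  shows "\<exists>c. C {a,b} = {c} \<and> c \<in> S \<and> c \<noteq> a \<and> c \<noteq> b \<and> {a,c} \<in> E \<and> {c,b} \<in> E \<and>
     (\<forall>w\<in>S-{a,b}. d a c + d c b \<le> d a w + d w b)"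
proof -
  from Cprops[OF assms] obtain c where c: "C {a,b} = {c}" by (metis card_1_singletonE)
  have cS: "c \<in> S" "c \<noteq> a" "c \<noteq> b" using Cprops[OF assms] c by auto
  have ac: "{a,c} \<in> E" unfolding Edef using assms c by blast
  have ba: "{b,a} = {a,b}" by blast
  have ba': "{b,a} \<in> E'" using assms ba by (simp only:)
  have cba: "c \<in> C {b,a}" using c ba by (simp only: singletonI)
  have "{b,c} \<in> {{a, c} | a b c. {a, b} \<in> E' \<and> c \<in> C {a, b}}"
    using ba' cba by blast
  then have bc: "{b,c} \<in> E" unfolding Edef by blast
  have cb0: "{c,b} = {b,c}" by blast
  have cb: "{c,b} \<in> E" using bc cb0 by (simp only:)
  have ww: "\<forall>w\<in>S-{a,b}. d a c + d c b \<le> d a w + d w b"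
  proof
    fix w assume w: "w \<in> S - {a,b}"
    show "d a c + d c b \<le> d a w + d w b"
    proof (cases "w = c")
      case False then show ?thesis using Cprops[OF assms] c w by auto
    qed simp
  qed
  show ?thesis using c cS ac cb ww by blast
qed

lemma E_Pow: "E \<subseteq> Pow S"
proof
  fix e assume "e \<in> E"
  then show "e \<in> Pow S" unfolding Edef
  proof
    assume "e \<in> E'" then show ?thesis using sub unfolding complete_edges_def by auto
  next
    assume "e \<in> {{a, c} | a b c. {a, b} \<in> E' \<and> c \<in> C {a, b}}"
    then obtain a b c where "e = {a,c}" "{a,b} \<in> E'" "c \<in> C {a,b}" by blast
    then show ?thesis using E'_edge Cprops by blast
  qed
qed

lemma finF: "finite F"
  using FE E_Pow finS by (meson finite_Pow_iff finite_subset)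

lemma matching: "v \<in> S \<Longrightarrow> e \<in> F \<Longrightarrow> e' \<in> F \<Longrightarrow> v \<in> e \<Longrightarrow> v \<in> e' \<Longrightarrow> e = e'"
proof -
  assume a: "v \<in> S" "e \<in> F" "e' \<in> F" "v \<in> e" "v \<in> e'"
  have "finite {e\<in>F. v\<in>e}" using finF by simp
  moreover have "card {e\<in>F. v\<in>e} \<le> Suc 0" using deg a by simp
  ultimately show ?thesis using a by (auto simp: card_le_Suc0_iff_eq)
qed

lemma match2: "v \<in> S \<Longrightarrow> {v,a} \<in> F \<Longrightarrow> {v,b} \<in> F \<Longrightarrow> a = b"
  using matching[of v "{v,a}" "{v,b}"] by (auto simp: doubleton_eq_iff)

abbreviation H where "H \<equiv> E - F"

lemma edge_reach: "{a,b} \<in> E' \<Longrightarrow> {a,b} \<notin> F \<Longrightarrow> reach d H a b (d a b)"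
  using Edef by (intro reach_edge) auto

lemma detour_reach:
  assumes "{a,b} \<in> E'" "{a,b} \<in> F" "w \<in> S" "w \<noteq> a" "w \<noteq> b"
  shows "reach d H a b (d a w + d w b)"
proof -
  obtain c where c: "c \<in> S" "c \<noteq> a" "c \<noteq> b" "{a,c} \<in> E" "{c,b} \<in> E"
    "\<forall>w\<in>S-{a,b}. d a c + d c b \<le> d a w + d w b" using detour[OF assms(1)] by blast
  have aS: "a \<in> S" "b \<in> S" using E'_edge assms(1) by auto
  have "{a,c} \<notin> F" using match2[of a c b] c assms aS by auto
  moreover have "{c,b} \<notin> F" using match2[of b c a] c assms aS by (auto simp: insert_commute)
  ultimately have "reach d H a b (d a c + d c b)"
    using c by (intro reach_trans reach_edge) auto
  then show ?thesis using c assms by (auto intro: reach_mono)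
qed

lemma walk_hdS: "walkE E' (x # y # r) \<Longrightarrow> x \<in> S \<and> y \<in> S \<and> {x,y} \<in> E'"
  using E'_edge by auto

lemma propA:
  "walkE E' (u # v # rest) \<Longrightarrow> distinct (u # v # rest) \<Longrightarrow> reach d H z v (s - 2 * d u v)
   \<Longrightarrow> reach d H z (last (v # rest)) (s + 3 * wlen d (v # rest))"
proof (induction rest arbitrary: u v s)
  case Nil
  have "d u v \<ge> 0" using Nil.prems(1) E'_edge dnn by auto
  then show ?case using Nil.prems(3) by (auto intro: reach_mono)
next
  case (Cons w rest)
  have uv: "{u,v} \<in> E'" and vw: "{v,w} \<in> E'" using Cons.prems(1) by auto
  have S3: "u \<in> S" "v \<in> S" "w \<in> S" using uv vw E'_edge by auto
  have dist: "u \<noteq> v" "u \<noteq> w" "v \<noteq> w" using Cons.prems(2) by auto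
  have rvw: "reach d H v w (2 * d u v + d v w)"
  proof (cases "{v,w} \<in> F")
    case True
    have "reach d H v w (d v u + d u w)" using detour_reach[OF vw True S3(1)] dist by auto
    moreover have "d v u + d u w \<le> 2 * d u v + d v w"
      using dsym[of u v] dtri[of u v w] S3 by auto
    ultimately show ?thesis by (rule reach_mono)
  next
    case False
    then have "reach d H v w (d v w)" using edge_reach vw by auto
    moreover have "d v w \<le> 2 * d u v + d v w" using dnn S3 by auto
    ultimately show ?thesis by (rule reach_mono)
  qed
  have "reach d H z w ((s - 2 * d u v) + (2 * d u v + d v w))"
    using reach_trans[OF Cons.prems(3) rvw] .
  then have "reach d H z w ((s + 3 * d v w) - 2 * d v w)"
    by (auto intro: reach_mono)
  moreover have "walkE E' (v # w # rest)" "distinct (v # w # rest)"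
    using Cons.prems by auto
  ultimately have "reach d H z (last (w # rest)) ((s + 3 * d v w) + 3 * wlen d (w # rest))"
    using Cons.IH by blast
  then show ?case by (simp add: algebra_simps)
qed

lemma main_distinct:
  assumes walk: "walkE E' ws" and dst: "distinct ws" and nF: "{hd ws, last ws} \<notin> F"
    and hS: "hd ws \<in> S"
  shows "reach d H (hd ws) (last ws) (3 * wlen d ws)"
proof (cases ws)
  case Nil then show ?thesis using walk by simp
next
  case (Cons x r0)
  note ws0 = this
  show ?thesis
  proof (cases r0)
  case Nil then show ?thesis using ws0 by (simp add: reach_refl)
  next
  case (Cons v1 r)
  then have ws: "ws = x # v1 # r" using ws0 by simp
  have e1: "{x,v1} \<in> E'" and xS: "x \<in> S" "v1 \<in> S" using walk ws E'_edge by auto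
  have y: "last ws = last (v1 # r)" using ws by simp
  show ?thesis
  proof (cases "{x,v1} \<in> F")
    case False
    have "reach d H x v1 (3 * d x v1 - 2 * d x v1)"
      using edge_reach[OF e1 False] by (auto intro: reach_mono)
    from propA[OF _ _ this] walk dst ws show ?thesis by simp
  next
    case F1: True
    obtain v2 r2 where r: "r = v2 # r2"
      using F1 nF ws by (cases r) auto
    have e2: "{v1,v2} \<in> E'" and v2S: "v2 \<in> S" using walk ws r E'_edge by auto
    have dst2: "x \<noteq> v1" "x \<noteq> v2" "v1 \<noteq> v2" using dst ws r by auto
    have nF2: "{v1,v2} \<notin> F" using match2[of v1 x v2] F1 dst2 xS by (auto simp: insert_commute)
    have R1: "reach d H x v1 (d x v1 + 2 * d v1 v2)"
    proof -
      have "reach d H x v1 (d x v2 + d v2 v1)" using detour_reach[OF e1 F1 v2S] dst2 by auto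
      moreover have "d x v2 + d v2 v1 \<le> d x v1 + 2 * d v1 v2"
        using dtri[of x v1 v2] dsym[of v1 v2] xS v2S by auto
      ultimately show ?thesis by (rule reach_mono)
    qed
    have R2: "reach d H x v2 (d x v1 + 3 * d v1 v2)"
      using reach_trans[OF R1 edge_reach[OF e2 nF2]] by (auto intro: reach_mono)
    show ?thesis
    proof (cases r2)
      case Nil
      have "d x v1 \<ge> 0" using dnn xS by auto
      then show ?thesis using ws r Nil reach_mono[OF R2, of "3 * wlen d ws"] by simp
    next
      case (Cons v3 r3)
      have e3: "{v2,v3} \<in> E'" and v3S: "v3 \<in> S" using walk ws r Cons E'_edge by auto
      have dst3: "x \<noteq> v3" "v1 \<noteq> v3" "v2 \<noteq> v3" using dst ws r Cons by auto
      have wl: "wlen d ws = d x v1 + d v1 v2 + d v2 v3 + wlen d (v3 # r3)"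
        using ws r Cons by simp
      have Q: "reach d H x v3 (d x v1 + 3 * d v1 v2 + d v2 v3) \<Longrightarrow> ?thesis"
      proof -
        assume "reach d H x v3 (d x v1 + 3 * d v1 v2 + d v2 v3)"
        then have "reach d H x v3 ((d x v1 + 3 * d v1 v2 + 3 * d v2 v3) - 2 * d v2 v3)"
          by (auto intro: reach_mono)
        from propA[OF _ _ this, of r3] walk dst ws r Cons
        have "reach d H x (last (v3 # r3))
           ((d x v1 + 3 * d v1 v2 + 3 * d v2 v3) + 3 * wlen d (v3 # r3))" by simp
        moreover have "(d x v1 + 3 * d v1 v2 + 3 * d v2 v3) + 3 * wlen d (v3 # r3) \<le> 3 * wlen d ws"
          using wl dnn xS by simp
        moreover have "last (v3 # r3) = last ws" using ws r Cons by simp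
        ultimately show ?thesis using reach_mono ws by (metis list.sel(1))
      qed
      show ?thesis
      proof (cases "{v2,v3} \<in> F")
        case False
        show ?thesis
          by (rule Q, rule reach_mono[OF reach_trans[OF R2 edge_reach[OF e3 False]]]) simp
      next
        case F3: True
        obtain c where c: "c \<in> S" "c \<noteq> v1" "c \<noteq> v2" "{v1,c} \<in> E" "{c,v2} \<in> E"
          "\<forall>w\<in>S-{v1,v2}. d v1 c + d c v2 \<le> d v1 w + d w v2" using detour[OF e2] by blast
        consider "c = x" | "c = v3" | "c \<noteq> x" "c \<noteq> v3" by blast
        then show ?thesis
        proof cases
          case 1
          have "{x,v2} \<notin> F" using match2[of x v1 v2] F1 dst2 xS by auto
          then have a: "reach d H x v2 (d x v2)" using c 1 by (intro reach_edge) (auto simp: insert_commute)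
          have b: "reach d H v2 v3 (d v2 v1 + d v1 v3)"
            using detour_reach[OF e3 F3 xS(2)] dst2 dst3 by auto
          show ?thesis
          proof (rule Q, rule reach_mono[OF reach_trans[OF a b]])
            show "d x v2 + (d v2 v1 + d v1 v3) \<le> d x v1 + 3 * d v1 v2 + d v2 v3"
              using dtri[of x v1 v2] dtri[of v1 v2 v3] dsym[of v1 v2] xS v2S v3S by auto
          qed
        next
          case 2
          have "{v1,v3} \<notin> F" using match2[of v1 x v3] F1 dst3 xS by (auto simp: insert_commute)
          then have b: "reach d H v1 v3 (d v1 v3)" using c 2 by (intro reach_edge) auto
          show ?thesis
          proof (rule Q, rule reach_mono[OF reach_trans[OF R1 b]])
            show "d x v1 + 2 * d v1 v2 + d v1 v3 \<le> d x v1 + 3 * d v1 v2 + d v2 v3"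
              using dtri[of v1 v2 v3] xS v2S v3S by auto
          qed
        next
          case 3
          have a: "reach d H x v1 (d x c + d c v1)"
            using detour_reach[OF e1 F1 c(1)] 3 c by auto
          have b: "reach d H v2 v3 (d v2 c + d c v3)"
            using detour_reach[OF e3 F3 c(1)] 3 c by auto
          define T where "T = d x c + d c v1 + d v1 v2 + (d v2 c + d c v3)"
          have RT: "reach d H x v3 T" unfolding T_def
            using reach_trans[OF reach_trans[OF a edge_reach[OF e2 nF2]] b] .
          have c1: "d v1 c + d c v2 \<le> d v1 x + d x v2" using c xS dst2 by auto
          have c2: "d v1 c + d c v2 \<le> d v1 v3 + d v3 v2" using c v3S dst3 by auto
          have T3: "T \<le> 3 * (d x v1 + d v1 v2 + d v2 v3)" unfolding T_def
            using c1 c2 dtri[of x v1 c] dtri[of c v2 v3] dtri[of x v1 v2] dtri[of v1 v2 v3]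
              dsym[of v1 x] dsym[of v3 v2] dsym[of c v1] dsym[of v2 c] xS v2S v3S c(1) by auto
          show ?thesis
          proof (cases r3)
            case Nil
            then show ?thesis using RT T3 ws r Cons by (auto intro: reach_mono)
          next
            case (Cons v4 r4)
            note r2 = \<open>r2 = v3 # r3\<close>
            have e4: "{v3,v4} \<in> E'" and v4S: "v4 \<in> S" using walk ws r r2 Cons E'_edge by auto
            have "v4 \<noteq> v2" using dst ws r r2 Cons by auto
            then have nF4: "{v3,v4} \<notin> F" using match2[of v3 v2 v4] F3 v3S
              by (auto simp: insert_commute)
            have "reach d H x v4 ((T + 3 * d v3 v4) - 2 * d v3 v4)"
              using reach_trans[OF RT edge_reach[OF e4 nF4]] by (auto intro: reach_mono)
            from propA[OF _ _ this, of r4] walk dst ws r r2 Cons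
            have "reach d H x (last (v4 # r4)) ((T + 3 * d v3 v4) + 3 * wlen d (v4 # r4))"
              by simp
            then show ?thesis using ws r r2 Cons wl T3 by (auto intro: reach_mono)
          qed
        qed
      qed
    qed
  qed
qed
qed

lemma wlen_nonneg: "walkE E' ws \<Longrightarrow> wlen d ws \<ge> 0"
proof (induction ws rule: induct_list012)
  case (3 x y zs)
  have "{x,y} \<in> E'" "walkE E' (y # zs)" using "3.prems" by auto
  then have "d x y \<ge> 0" "wlen d (y # zs) \<ge> 0" using E'_edge dnn "3.IH"(2) by auto
  then show ?case by simp
qed auto

lemma main:
  "walkE E' ws \<Longrightarrow> {hd ws, last ws} \<notin> F \<Longrightarrow> hd ws \<in> S
   \<Longrightarrow> reach d H (hd ws) (last ws) (3 * wlen d ws)"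
proof (induction "length ws" arbitrary: ws rule: less_induct)
  case less
  show ?case
  proof (cases "distinct ws")
    case True then show ?thesis using main_distinct less.prems by blast
  next
    case False
    then obtain a y b c where ws: "ws = a @ [y] @ b @ [y] @ c"
      using not_distinct_decomp by blast
    define ws' where "ws' = a @ y # c"
    have e1: "walkE E' (a @ y # (b @ y # c))" using less.prems(1) ws by simp
    then have w1: "walkE E' (a @ [y])" and w2': "walkE E' (y # (b @ y # c))"
      using walkE_app[of E' a y "b @ y # c"] by blast+
    have "(y # b) @ y # c = y # (b @ y # c)" by simp
    then have w2: "walkE E' ((y # b) @ y # c)" using w2' by (simp only:)
    then have w3: "walkE E' ((y # b) @ [y])" and w4: "walkE E' (y # c)"
      using walkE_app[of E' "y # b" y c] by blast+
    have wws': "walkE E' ws'" unfolding ws'_def using walkE_app[of E' a y c] w1 w4 by blast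
    have "wlen d ws = wlen d (a @ [y]) + (wlen d ((y # b) @ [y]) + wlen d (y # c))"
      using ws wlen_app[of d a y "b @ y # c"] wlen_app[of d "y # b" y c] by (simp del: wlen.simps)
    moreover have "wlen d ws' = wlen d (a @ [y]) + wlen d (y # c)"
      unfolding ws'_def by (rule wlen_app)
    moreover have "wlen d ((y # b) @ [y]) \<ge> 0" using wlen_nonneg w3 .
    ultimately have le: "wlen d ws' \<le> wlen d ws" by simp
    have hd: "hd ws' = hd ws" using ws unfolding ws'_def by (cases a) auto
    have lst: "last ws' = last ws" using ws unfolding ws'_def by (cases c) auto
    have "length ws' < length ws" using ws unfolding ws'_def by simp
    then have "reach d H (hd ws') (last ws') (3 * wlen d ws')"
      using less.hyps wws' less.prems hd lst by metis
    then show ?thesis using hd lst le by (auto intro: reach_mono)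
  qed
qed

lemma step1:
  assumes sp: "is_spanner S d E' t" and xy: "{x,y} \<in> complete_edges S - F" and e: "\<epsilon> > 0"
  shows "reach d H x y (3 * (t * d x y + \<epsilon>))"
proof -
  have "{x,y} \<in> complete_edges S" using xy by blast
  then have xyS0: "x \<in> S \<and> y \<in> S \<and> x \<noteq> y" by (rule ce_mem)
  then have xyS: "x \<in> S" "y \<in> S" "x \<noteq> y" by simp_all
  have "graph_dist d E' x y \<le> ereal (t * d x y)" using sp xyS unfolding is_spanner_def by blast
  also have "\<dots> < ereal (t * d x y + \<epsilon>)" using e by simp
  finally obtain ws where ws: "is_walk E' ws" "hd ws = x" "last ws = y"
    "ereal (walk_length d ws) < ereal (t * d x y + \<epsilon>)"
    unfolding graph_dist_def INF_less_iff by blast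
  have "reach d H x y (3 * wlen d ws)"
    using main[of ws] ws xy xyS unfolding is_walk_eq by auto
  then show ?thesis using ws(4) unfolding walk_length_eq by (auto intro: reach_mono)
qed

lemma step2:
  assumes sp: "is_spanner S d E' t" and e: "\<epsilon> > 0"
  shows "walkE (complete_edges S - F) ws \<Longrightarrow> hd ws \<in> S \<Longrightarrow>
    reach d H (hd ws) (last ws) (3 * t * wlen d ws + 3 * real (length ws) * \<epsilon>)"
proof (induction "complete_edges S - F" ws rule: walkE.induct)
  case (2 x)
  show ?case using e by (auto intro: reach_refl)
next
  case (3 x y xs)
  have "{x,y} \<in> complete_edges S" using "3.prems" by auto
  then have "x \<in> S \<and> y \<in> S \<and> x \<noteq> y" by (rule ce_mem)
  then have yS: "y \<in> S" by simp
  have a: "reach d H x y (3 * (t * d x y + \<epsilon>))" using step1[OF sp _ e] 3 by auto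
  have b: "reach d H y (last (y # xs)) (3 * t * wlen d (y # xs) + 3 * real (length (y # xs)) * \<epsilon>)"
    using 3 yS by auto
  show ?case using reach_trans[OF a b] by (auto simp: algebra_simps intro: reach_mono)
qed auto

lemma step3:
  assumes sp: "is_spanner S d E' t" and t: "t \<ge> 1" and pS: "p \<in> S"
  shows "graph_dist d H p q \<le> ereal (3 * t) * graph_dist d (complete_edges S - F) p q"
proof -
  have t0: "3 * t > 0" using t by simp
  have each: "graph_dist d H p q \<le> ereal (3 * t * wlen d ws)"
    if ws: "walkE (complete_edges S - F) ws" "hd ws = p" "last ws = q" for ws
  proof (rule ereal_le_epsilon2)
    fix e :: real assume e: "0 < e"
    have l: "real (length ws) > 0" using ws by (cases ws) auto
    define \<epsilon> where "\<epsilon> = e / (3 * real (length ws))"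
    have \<epsilon>: "\<epsilon> > 0" using e l unfolding \<epsilon>_def by simp
    have eq: "3 * real (length ws) * \<epsilon> = e" using l unfolding \<epsilon>_def by simp
    have "reach d H p q (3 * t * wlen d ws + 3 * real (length ws) * \<epsilon>)"
      using step2[OF sp \<epsilon> ws(1)] ws pS by auto
    then show "graph_dist d H p q \<le> ereal (3 * t * wlen d ws) + ereal e"
      using reach_dist eq by fastforce
  qed
  have "ereal (1 / (3 * t)) * graph_dist d H p q \<le> graph_dist d (complete_edges S - F) p q"
    unfolding graph_dist_def[of d "complete_edges S - F"]
  proof (rule INF_greatest)
    fix ws assume "ws \<in> {xs. is_walk (complete_edges S - F) xs \<and> hd xs = p \<and> last xs = q}"
    then have "graph_dist d H p q \<le> ereal (3 * t * wlen d ws)"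
      using each unfolding is_walk_eq by blast
    then have "ereal (1 / (3 * t)) * graph_dist d H p q \<le> ereal (1 / (3 * t)) * ereal (3 * t * wlen d ws)"
      using t0 by (intro ereal_mult_left_mono) auto
    also have "\<dots> = ereal (walk_length d ws)" using t0 by (simp add: walk_length_eq)
    finally show "ereal (1 / (3 * t)) * graph_dist d H p q \<le> ereal (walk_length d ws)" .
  qed
  then have "ereal (3 * t) * (ereal (1 / (3 * t)) * graph_dist d H p q)
      \<le> ereal (3 * t) * graph_dist d (complete_edges S - F) p q"
    using t0 by (intro ereal_mult_left_mono) auto
  moreover have "ereal (3 * t) * (ereal (1 / (3 * t)) * graph_dist d H p q) = graph_dist d H p q"
    using t0 by (simp add: mult.assoc[symmetric])
  ultimately show ?thesis by simp
qed

end

lemma card_bound: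
  assumes finS: "finite S" and sub: "E' \<subseteq> complete_edges S"
    and cons: "is_construction S d E' 1 C E"
  shows "card E \<le> 3 * card E'"
proof -
  define X where "X = {{a, c} | a b c. {a, b} \<in> E' \<and> c \<in> C {a, b}}"
  have E: "E = E' \<union> X" using cons unfolding is_construction_def X_def by blast
  have "complete_edges S \<subseteq> Pow S" unfolding complete_edges_def by auto
  then have finE': "finite E'" using sub finS by (meson finite_Pow_iff finite_subset subset_trans)
  have ce2: "e \<in> E' \<Longrightarrow> finite e \<and> card e = 2" for e
    using sub unfolding complete_edges_def by auto
  define U where "U = (\<Union>e\<in>E'. (\<lambda>a. {a, the_elem (C e)}) ` e)"
  have XU: "X \<subseteq> U"
  proof
    fix x assume "x \<in> X"
    then obtain a b c where x: "x = {a,c}" "{a,b} \<in> E'" "c \<in> C {a,b}" unfolding X_def by blast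
    have "card (C {a,b}) = 1" using cons x(2) unfolding is_construction_def by simp
    then obtain c' where "C {a,b} = {c'}" by (metis card_1_singletonE)
    then have "the_elem (C {a,b}) = c" using x(3) by simp
    then show "x \<in> U" unfolding U_def using x by blast
  qed
  have finU: "finite U" unfolding U_def using finE' ce2 by auto
  have "card U \<le> (\<Sum>e\<in>E'. card ((\<lambda>a. {a, the_elem (C e)}) ` e))"
    unfolding U_def using finE' by (rule card_UN_le)
  also have "\<dots> \<le> (\<Sum>e\<in>E'. 2)"
    by (rule sum_mono) (metis card_image_le ce2)
  also have "\<dots> = 2 * card E'" by simp
  finally have "card X \<le> 2 * card E'" using card_mono[OF finU XU] by simp
  then show ?thesis unfolding E using card_Un_le[of E' X] by simp
qed

theorem theorem1:
  fixes S :: "'a set" and d :: "'a \<Rightarrow> 'a \<Rightarrow> real" and t :: real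
    and E' E :: "'a set set" and C :: "'a set \<Rightarrow> 'a set"
  assumes "finite S" and "metric_on S d" and "card S \<ge> 3" and "t \<ge> 1"
    and "E' \<subseteq> complete_edges S" and "is_spanner S d E' t"
    and "is_construction S d E' 1 C E"
  shows "is_faulty_degree_spanner S d E 1 (3 * t) \<and> card E \<le> 3 * card E'"
proof
  show "card E \<le> 3 * card E'" using card_bound assms by blast
  show "is_faulty_degree_spanner S d E 1 (3 * t)"
    unfolding is_faulty_degree_spanner_def
  proof (intro allI impI ballI)
    fix F p q assume F: "F \<subseteq> E \<and> (\<forall>v\<in>S. card {e \<in> F. v \<in> e} \<le> 1)" and pq: "p \<in> S" "q \<in> S"
    interpret setting S d E' E F C
      using assms F by unfold_locales auto
    show "graph_dist d (E - F) p q \<le> ereal (3 * t) * graph_dist d (complete_edges S - F) p q"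
      using step3 assms pq by blast
  qed
qed

end
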